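(* Let $q=2^n>2$ and let $g:\mathbb{F}_{q^2}\to\mathbb{F}_{q^2}$ be a function such that $f(x)=g(x^{q-1})$ takes values in $\mathbb{F}_2$ for all $x\in\mathbb{F}_{q^2}$. Then for $\alpha\in\mathbb{F}_{q^2}$, $$W_f(\alpha)=\begin{cases}(-1)^{g(0)}-\sum_{\lambda\in U}(-1)^{g(\lambda)}+(-1)^{g(\alpha^{1-q})}\,q, & \text{if } \alpha\neq0,\\[2pt] (-1)^{g(0)}+(q-1)\sum_{\lambda\in U}(-1)^{g(\overline{\lambda}^2)}, & \text{if } \alpha=0.\end{cases}$$
   Context: For $x\in\mathbb{F}_{q^2}$ write $\overline{x}=x^{q}$; $U=\{\eta\in\mathbb{F}_{q^2}:\eta^{q+1}=1\}$ is the unit circle. For $\alpha\ne0$, $\alpha^{1-q}$ denotes $(\alpha^{q-1})^{-1}$. The Walsh transform of a Boolean function $f:\mathbb{F}_{q^2}\to\mathbb{F}_2$ is $W_f(\alpha)=\sum_{x\in\mathbb{F}_{q^2}}(-1)^{f(x)+\mathrm{Tr}_1^{2n}(\alpha x)}$, where $\mathrm{Tr}_1^{2n}$ is the absolute trace of $\mathbb{F}_{2^{2n}}$. Values in $\mathbb{F}_2$ in exponents of $-1$ are identified with $0,1\in\mathbb{Z}$ (note $g$ takes values in $\mathbb{F}_2$ on $\{0\}\cup U$). *)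

theory Defs
  imports Main
begin

definition abs_trace :: "nat \<Rightarrow> 'a::field \<Rightarrow> 'a" where
  "abs_trace m x = (\<Sum>i<m. x ^ (2 ^ i))"

text \<open>Identify an element of F_2 = {0,1} inside the field with the integer 0 or 1.\<close>
definition b2i :: "'a::zero \<Rightarrow> nat" where
  "b2i y = (if y = 0 then 0 else 1)"

text \<open>Walsh transform of f over F_{q^2}, q = 2^n (so the absolute trace is Tr_1^{2n}).\<close>
definition walsh :: "nat \<Rightarrow> ('a::{field,finite} \<Rightarrow> 'a) \<Rightarrow> 'a \<Rightarrow> int" where
  "walsh n f \<alpha> = (\<Sum>x\<in>UNIV. (-1) ^ (b2i (f x) + b2i (abs_trace (2*n) (\<alpha> * x))))"

definition unit_circle :: "nat \<Rightarrow> 'a::field set" where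
  "unit_circle n = {\<eta>. \<eta> ^ (2 ^ n + 1) = 1}"

end

theory Submission imports Defs "HOL-Computational_Algebra.Polynomial"
begin

lemma roots_bound:
  fixes c :: "'a::field"
  assumes "m > 0"
  shows "card {x. x ^ m = c} \<le> m"
proof -
  define p where "p = monom (1::'a) m + [:-c:]"
  have deg: "degree p = m" unfolding p_def using assms
    by (subst degree_add_eq_left) (auto simp: degree_monom_eq)
  hence "p \<noteq> 0" using assms by auto
  moreover have "{x. x ^ m = c} = {x. poly p x = 0}" by (auto simp: p_def poly_monom)
  ultimately show ?thesis using card_poly_roots_bound[of p] deg by simp
qed

context
  fixes n :: nat
  assumes card: "card (UNIV :: 'a::{field,finite} set) = 2 ^ (2 * n)"
    and q_gt_2: "(2::nat) ^ n > 2"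
begin

lemma n_pos: "n > 0" using q_gt_2 by (cases n) auto

lemma char2: "(2::'a) = 0"
proof -
  have "(\<Sum>y\<in>(UNIV::'a set). 1 + y) = (\<Sum>y\<in>UNIV. y)"
    by (rule sum.reindex_bij_betw) (auto simp: bij_betw_def inj_on_def intro!: image_eqI[where x="_ - 1"])
  hence "of_nat (card (UNIV::'a set)) * (1::'a) = 0" by (simp add: sum.distrib)
  hence "(2::'a) ^ (2*n) = 0" using card by simp
  thus ?thesis by simp
qed

lemma add_self [simp]: "(x::'a) + x = 0"
  using char2 by (metis mult_2 mult_zero_left)

lemma minus_eq [simp]: "- (x::'a) = x"
  using add_self by (metis add_eq_0_iff)

lemma diff_eq_add: "(x::'a) - y = x + y"
  by (metis diff_conv_add_uminus minus_eq)

lemma frob2: "((a::'a) + b) ^ 2 = a ^ 2 + b ^ 2"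
proof -
  show ?thesis using char2 by (simp add: power2_sum)
qed

lemma frob: "((a::'a) + b) ^ (2 ^ i) = a ^ (2 ^ i) + b ^ (2 ^ i)"
proof (induction i)
  case (Suc i)
  have "(a + b) ^ (2 ^ Suc i) = ((a + b) ^ (2 ^ i)) ^ 2" by (simp add: power_mult[symmetric] mult.commute)
  also have "\<dots> = (a ^ (2 ^ i)) ^ 2 + (b ^ (2 ^ i)) ^ 2" using Suc frob2 by simp
  also have "\<dots> = a ^ (2 ^ Suc i) + b ^ (2 ^ Suc i)" by (simp add: power_mult[symmetric] mult.commute)
  finally show ?case .
qed simp

lemma fermat_nz: assumes "(x::'a) \<noteq> 0" shows "x ^ (2 ^ (2*n) - 1) = 1"
proof -
  let ?S = "UNIV - {0::'a}"
  have "(\<Prod>y\<in>?S. x * y) = (\<Prod>y\<in>?S. y)"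
    by (rule prod.reindex_bij_betw) (use assms in \<open>auto simp: bij_betw_def inj_on_def intro!: image_eqI[where x="_ / x"]\<close>)
  hence "x ^ card ?S * (\<Prod>y\<in>?S. y) = (\<Prod>y\<in>?S. y)" by (simp add: prod.distrib)
  moreover have "(\<Prod>y\<in>?S. y) \<noteq> 0" by simp
  moreover have "card ?S = 2^(2*n) - 1" using card by (simp add: card_Diff_singleton)
  ultimately show ?thesis by simp
qed

lemma fermat: "(x::'a) ^ (2 ^ (2*n)) = x"
proof (cases "x = 0")
  case True thus ?thesis by simp
next
  case False
  have "(2::nat) ^ (2*n) = Suc (2^(2*n) - 1)" by simp
  hence "x ^ (2 ^ (2*n)) = x * x ^ (2 ^ (2*n) - 1)" by (metis power_Suc)
  thus ?thesis using fermat_nz[OF False] by simp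
qed

lemma sq_sum: "(\<Sum>i\<in>A. f i :: 'a) ^ 2 = (\<Sum>i\<in>A. (f i) ^ 2)"
proof (induction A rule: infinite_finite_induct)
  case (insert x F) thus ?case by (simp add: frob2)
qed auto

lemma trace_zero [simp]: "abs_trace m (0::'a) = 0"
  by (simp add: abs_trace_def zero_power)

lemma trace_add: "abs_trace (2*n) ((x::'a) + y) = abs_trace (2*n) x + abs_trace (2*n) y"
  by (simp add: abs_trace_def frob sum.distrib)

lemma trace_sq: "(abs_trace (2*n) (x::'a)) ^ 2 = abs_trace (2*n) x"
proof -
  have "(abs_trace (2*n) x) ^ 2 = (\<Sum>i<2*n. x ^ (2 ^ Suc i))"
    unfolding abs_trace_def sq_sum by (simp add: power_mult[symmetric] mult.commute)
  moreover have "(\<Sum>i<Suc (2*n). x ^ (2 ^ i)) = x + (\<Sum>i<2*n. x ^ (2 ^ Suc i))"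
    by (subst sum.lessThan_Suc_shift) simp
  moreover have "(\<Sum>i<Suc (2*n). x ^ (2 ^ i)) = abs_trace (2*n) x + x"
    by (simp add: abs_trace_def fermat)
  ultimately show ?thesis by (simp add: add.commute)
qed

lemma trace01: "abs_trace (2*n) (x::'a) = 0 \<or> abs_trace (2*n) x = 1"
proof -
  let ?t = "abs_trace (2*n) x"
  have "?t * (?t - 1) = 0" using trace_sq[of x] by (simp add: power2_eq_square algebra_simps)
  thus ?thesis by auto
qed

definition chi :: "'a \<Rightarrow> int" where "chi z = (-1) ^ b2i (abs_trace (2*n) z)"

lemma chi_eq: "chi z = (-1) ^ b2i (abs_trace (2*n) z)" by (simp add: chi_def)

lemma chi_add: "chi (x + y) = chi x * chi y"
  using trace01[of x] trace01[of y] unfolding chi_def trace_add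
  by (auto simp: b2i_def)

lemma chi_zero [simp]: "chi 0 = 1" by (simp add: chi_def b2i_def)

lemma chi_pm: "chi x = 1 \<or> chi x = -1"
  unfolding chi_def b2i_def by auto

lemma char_sum_zero:
  assumes "finite A" and cl: "\<And>a b. a \<in> A \<Longrightarrow> b \<in> A \<Longrightarrow> a + b \<in> A"
    and y0: "y0 \<in> A" and hom: "\<And>a b. psi (a + b) = psi a * psi b"
    and m1: "psi y0 = (-1::int)"
  shows "(\<Sum>y\<in>(A::'a set). psi y) = 0"
proof -
  have "(\<Sum>y\<in>A. psi (y + y0)) = (\<Sum>y\<in>A. psi y)"
  proof (rule sum.reindex_bij_betw)
    show "bij_betw (\<lambda>y. y + y0) A A"
      unfolding bij_betw_def inj_on_def
    proof (intro conjI ballI impI)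
      show "(\<lambda>y. y + y0) ` A = A"
      proof
        show "(\<lambda>y. y + y0) ` A \<subseteq> A" using cl y0 by auto
        show "A \<subseteq> (\<lambda>y. y + y0) ` A"
        proof
          fix x assume "x \<in> A"
          hence "x + y0 \<in> A" "x = (x + y0) + y0" using cl y0 by (auto simp: add.assoc)
          thus "x \<in> (\<lambda>y. y + y0) ` A" by blast
        qed
      qed
    qed simp
  qed
  moreover have "(\<Sum>y\<in>A. psi (y + y0)) = - (\<Sum>y\<in>A. psi y)" using m1 by (simp add: hom sum_negf)
  ultimately show ?thesis by simp
qed

lemma trace_nonzero: "\<exists>z::'a. abs_trace (2*n) z = 1"
proof -
  define p where "p = (\<Sum>i<2*n. monom (1::'a) (2^i))"
  have pe: "poly p x = abs_trace (2*n) x" for x by (simp add: p_def poly_sum poly_monom abs_trace_def)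
  have "coeff p (2^(2*n-1)) = (\<Sum>i<2*n. if i = 2*n-1 then 1 else 0)"
    unfolding p_def coeff_sum coeff_monom by (intro sum.cong) auto
  also have "\<dots> = 1" using n_pos by simp
  finally have "p \<noteq> 0" by auto
  moreover have "degree p \<le> 2^(2*n-1)" unfolding p_def
    by (intro degree_sum_le) (auto simp: degree_monom_eq)
  ultimately have "card {x. poly p x = 0} < card (UNIV::'a set)"
  proof -
    have "(2::nat)^(2*n-1) < 2^(2*n)" using n_pos by (intro power_strict_increasing) auto
    thus ?thesis using card_poly_roots_bound[of p] card \<open>p \<noteq> 0\<close> \<open>degree p \<le> _\<close> by linarith
  qed
  hence "{x. poly p x = 0} \<noteq> UNIV" by auto
  then obtain z where "poly p z \<noteq> 0" by auto
  thus ?thesis using trace01[of z] pe by auto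
qed

definition fib :: "'a \<Rightarrow> 'a set" where "fib l = {x. x \<noteq> 0 \<and> x ^ (2^n - 1) = l}"

lemma qq: "(2::nat)^(2*n) = 2^n * 2^n" by (simp add: power_mult[symmetric] mult_2[symmetric] power_add[symmetric])

lemma qq1: "(2^n - 1) * (2^n + 1) = (2::nat)^(2*n) - 1"
proof -
  have "(1::nat) \<le> 2^n" by simp
  thus ?thesis unfolding qq by (simp add: algebra_simps diff_mult_distrib)
qed

lemma pow_in_U: "(x::'a) \<noteq> 0 \<Longrightarrow> x ^ (2^n - 1) \<in> unit_circle n"
proof -
  assume "x \<noteq> 0"
  have "(x ^ (2^n - 1)) ^ (2^n + 1) = x ^ ((2^n - 1) * (2^n + 1))" by (simp only: power_mult)
  also have "\<dots> = 1" unfolding qq1 using fermat_nz[OF \<open>x \<noteq> 0\<close>] .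
  finally show ?thesis unfolding unit_circle_def by simp
qed

lemma pow_in_U': "(x::'a) \<noteq> 0 \<Longrightarrow> x ^ (2^n - Suc 0) \<in> unit_circle n"
  using pow_in_U by simp

lemma card_U_le: "card (unit_circle n :: 'a set) \<le> 2^n + 1"
  unfolding unit_circle_def by (rule roots_bound) simp

lemma fib_le: "card (fib l) \<le> 2^n - 1"
proof -
  have "card (fib l) \<le> card {x. x ^ (2^n - 1) = l}" by (intro card_mono) (auto simp: fib_def)
  also have "\<dots> \<le> 2^n - 1" using q_gt_2 by (intro roots_bound) simp
  finally show ?thesis .
qed

lemma fib_sum: "(\<Sum>l\<in>unit_circle n. card (fib l)) = 2^(2*n) - 1"
proof -
  have "(\<Sum>l\<in>(unit_circle n :: 'a set). \<Sum>x\<in>{x. x \<in> UNIV - {0} \<and> x ^ (2^n - 1) = l}. (1::nat)) = (\<Sum>x\<in>UNIV - {0::'a}. 1)"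
  proof (rule sum.group[where g="\<lambda>x. x ^ (2^n - 1)" and h="\<lambda>_. 1"])
    show "(\<lambda>x. x ^ (2^n - 1)) ` (UNIV - {0::'a}) \<subseteq> unit_circle n" using pow_in_U by blast
  qed auto
  moreover have "{x. x \<in> UNIV - {0} \<and> x ^ (2^n - 1) = l} = fib l" for l by (auto simp: fib_def)
  ultimately show ?thesis using card by (simp add: card_Diff_singleton)
qed

lemma card_fib_and_U: "(\<forall>l\<in>unit_circle n. card (fib l) = 2^n - 1) \<and> card (unit_circle n :: 'a set) = 2^n + 1"
proof -
  let ?U = "unit_circle n :: 'a set"
  have "(\<Sum>l\<in>?U. card (fib l)) \<le> (\<Sum>l\<in>?U. 2^n - 1)" by (intro sum_mono fib_le)
  also have "\<dots> = card ?U * (2^n - 1)" by simp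
  finally have le1: "(\<Sum>l\<in>?U. card (fib l)) \<le> card ?U * (2^n - 1)" by simp
  have A: "card ?U * (2^n - 1) \<le> (2^n + 1) * (2^n - 1)" using card_U_le by (intro mult_right_mono) auto
  have B: "(2^n + 1) * (2^n - 1) = (\<Sum>l\<in>?U. card (fib l))" using fib_sum qq1 by (simp add: mult.commute)
  have *: "card ?U * (2^n - 1) = (2^n + 1) * (2^n - 1)" "(\<Sum>l\<in>?U. card (fib l)) = (\<Sum>l\<in>?U. 2^n - 1)"
    using le1 A B by simp_all
  have "2^n - 1 \<noteq> (0::nat)" using q_gt_2 by simp
  hence "card ?U = 2^n + 1" using *(1) mult_cancel2 by metis
  moreover have "\<forall>l\<in>?U. card (fib l) = 2^n - 1"
    using sum_mono_inv[OF *(2) fib_le] by auto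
  ultimately show ?thesis by blast
qed

lemma card_fib: "l \<in> unit_circle n \<Longrightarrow> card (fib l) = 2^n - 1" using card_fib_and_U by blast
lemma card_U: "card (unit_circle n :: 'a set) = 2^n + 1" using card_fib_and_U by blast

definition Kset :: "'a set" where "Kset = {y. y ^ (2^n) = y}"

lemma pow_q: "(x::'a) ^ (2^n) = x * x ^ (2^n - 1)"
proof -
  have "(2::nat)^n = Suc (2^n - 1)" by simp
  thus ?thesis by (metis power_Suc)
qed

lemma fib1: "fib 1 = Kset - {0}"
  unfolding fib_def Kset_def by (auto simp: pow_q)

lemma one_U: "(1::'a) \<in> unit_circle n" by (simp add: unit_circle_def)

lemma card_K: "card Kset = 2^n"
proof -
  have "0 \<in> Kset" by (simp add: Kset_def)
  hence "Kset = insert 0 (Kset - {0})" by (rule insert_Diff[symmetric])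
  hence "Kset = insert 0 (fib 1)" by (simp only: fib1)
  moreover have "0 \<notin> fib 1" by (simp add: fib_def)
  ultimately have "card Kset = Suc (card (fib 1))" by simp
  thus ?thesis using card_fib[OF one_U] by simp
qed

lemma K_add: "a \<in> Kset \<Longrightarrow> b \<in> Kset \<Longrightarrow> a + b \<in> Kset"
  unfolding Kset_def using frob[of a b n] by simp

lemma K_mult: "a \<in> Kset \<Longrightarrow> b \<in> Kset \<Longrightarrow> a * b \<in> Kset"
  unfolding Kset_def by (simp add: power_mult_distrib)

lemma K_trace_aux:
  assumes "z \<in> Kset"
  shows "(\<Sum>i<n+m. (z::'a) ^ (2^i)) = (\<Sum>i<n. z ^ (2^i)) + (\<Sum>i<m. z ^ (2^i))"
proof (induction m)
  case (Suc m)
  have "z ^ (2^(n+m)) = (z ^ (2^n)) ^ (2^m)" by (simp add: power_add power_mult)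
  also have "\<dots> = z ^ (2^m)" using assms by (simp add: Kset_def)
  finally show ?case using Suc by (simp add: add.assoc)
qed simp

lemma K_trace: "z \<in> Kset \<Longrightarrow> abs_trace (2*n) z = 0"
  unfolding abs_trace_def mult_2 by (simp add: K_trace_aux)

lemma decomp:
  fixes F :: "'a \<Rightarrow> int" and G :: "'a \<Rightarrow> int"
  shows "(\<Sum>x\<in>UNIV - {0}. F (x ^ (2^n - 1)) * G x) = (\<Sum>l\<in>unit_circle n. F l * (\<Sum>x\<in>fib l. G x))"
proof -
  have img: "(\<lambda>x. x ^ (2^n - 1)) ` (UNIV - {0::'a}) \<subseteq> unit_circle n" using pow_in_U by blast
  have "(\<Sum>l\<in>unit_circle n. \<Sum>x\<in>{x. x \<in> UNIV - {0} \<and> x ^ (2^n - 1) = l}. F (x ^ (2^n - 1)) * G x)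
      = (\<Sum>x\<in>UNIV - {0}. F (x ^ (2^n - 1)) * G x)"
    by (rule sum.group[OF _ _ img]) auto
  moreover have "(\<Sum>x\<in>{x. x \<in> UNIV - {0} \<and> x ^ (2^n - 1) = l}. F (x ^ (2^n - 1)) * G x)
      = F l * (\<Sum>x\<in>fib l. G x)" for l
    unfolding sum_distrib_left by (rule sum.cong) (auto simp: fib_def)
  ultimately show ?thesis by simp
qed

lemma sq_map_U:
  "(\<Sum>l\<in>unit_circle n. (H::'a\<Rightarrow>int) l) = (\<Sum>l\<in>unit_circle n. H ((l ^ (2^n)) ^ 2))"
proof -
  let ?U = "unit_circle n :: 'a set"
  let ?m = "\<lambda>l::'a. (l ^ (2^n)) ^ 2"
  have inj: "inj_on ?m ?U"
  proof
    fix a b assume "?m a = ?m b"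
    hence "(a ^ (2^n) + b ^ (2^n)) ^ 2 = 0" using frob2 by (simp add: add_self)
    hence "(a + b) ^ (2^n) = 0" by (simp add: frob)
    hence "a + b = 0" by simp
    thus "a = b" by (metis add_self add_right_cancel)
  qed
  have sub: "?m ` ?U \<subseteq> ?U"
  proof
    fix x assume "x \<in> ?m ` ?U"
    then obtain l where l: "l \<in> ?U" "x = ?m l" by auto
    have "x ^ (2^n + 1) = (l ^ (2^n + 1)) ^ (2^n * 2)"
      unfolding l(2) by (simp only: power_mult[symmetric] mult.commute mult.left_commute)
    also have "\<dots> = 1" using l(1) by (simp add: unit_circle_def)
    finally show "x \<in> ?U" by (simp add: unit_circle_def)
  qed
  have "?m ` ?U = ?U" by (rule endo_inj_surj[OF _ sub inj]) simp
  hence "(\<Sum>l\<in>?U. H l) = (\<Sum>l\<in>?m ` ?U. H l)" by simp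
  also have "\<dots> = (\<Sum>l\<in>?U. H (?m l))" by (rule sum.reindex[OF inj, unfolded comp_def])
  finally show ?thesis .
qed

definition Ssum :: "'a \<Rightarrow> 'a \<Rightarrow> int" where "Ssum a l = (\<Sum>x\<in>fib l. chi (a * x))"

lemma fib_nonempty: "l \<in> unit_circle n \<Longrightarrow> \<exists>x0. x0 \<in> fib l"
proof -
  assume "l \<in> unit_circle n"
  hence "card (fib l) = 2^n - 1" by (rule card_fib)
  hence "card (fib l) \<noteq> 0" using q_gt_2 by simp
  hence "fib l \<noteq> {}" by (metis card.empty)
  thus ?thesis by blast
qed

lemma fib_eq: "x0 \<in> fib l \<Longrightarrow> fib l = (\<lambda>y. x0 * y) ` (Kset - {0})"
proof -
  assume x0: "x0 \<in> fib l"
  hence nz: "x0 \<noteq> 0" and l: "x0 ^ (2^n - 1) = l" by (auto simp: fib_def)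
  hence lnz: "l \<noteq> 0" by auto
  show ?thesis
  proof
    show "fib l \<subseteq> (\<lambda>y. x0 * y) ` (Kset - {0})"
    proof
      fix x assume "x \<in> fib l"
      hence "x \<noteq> 0" "x ^ (2^n - 1) = l" by (auto simp: fib_def)
      hence "(x / x0) \<in> fib 1" using nz lnz l by (simp add: fib_def power_divide)
      hence "x / x0 \<in> Kset - {0}" using fib1 by simp
      moreover have "x = x0 * (x / x0)" using nz by simp
      ultimately show "x \<in> (\<lambda>y. x0 * y) ` (Kset - {0})" by blast
    qed
    show "(\<lambda>y. x0 * y) ` (Kset - {0}) \<subseteq> fib l"
    proof
      fix x assume "x \<in> (\<lambda>y. x0 * y) ` (Kset - {0})"
      then obtain y where y: "y \<in> fib 1" "x = x0 * y" using fib1 by auto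
      thus "x \<in> fib l" using nz l by (auto simp: fib_def power_mult_distrib)
    qed
  qed
qed

lemma S_eq: "x0 \<in> fib l \<Longrightarrow> Ssum a l = (\<Sum>y\<in>Kset. chi (a * x0 * y)) - 1"
proof -
  assume x0: "x0 \<in> fib l"
  hence nz: "x0 \<noteq> 0" by (simp add: fib_def)
  have inj: "inj_on (\<lambda>y. x0 * y) (Kset - {0})" using nz by (auto simp: inj_on_def)
  have "Ssum a l = (\<Sum>y\<in>Kset - {0}. chi (a * (x0 * y)))"
    unfolding Ssum_def fib_eq[OF x0] by (simp add: sum.reindex[OF inj])
  also have "\<dots> = (\<Sum>y\<in>Kset. chi (a * x0 * y)) - chi (a * x0 * 0)"
    by (subst sum_diff1) (auto simp: Kset_def mult.assoc)
  finally show ?thesis by simp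
qed

lemma T_cases: "(\<Sum>y\<in>Kset. chi (c * y)) = 2^n \<or> (\<Sum>y\<in>Kset. chi (c * y)) = 0"
proof (cases "\<forall>y\<in>Kset. chi (c * y) = 1")
  case True
  hence "(\<Sum>y\<in>Kset. chi (c * y)) = (\<Sum>y\<in>Kset. 1)" by simp
  thus ?thesis using card_K by simp
next
  case False
  then obtain y0 where y0: "y0 \<in> Kset" "chi (c * y0) = -1" using chi_pm by blast
  have "(\<Sum>y\<in>Kset. chi (c * y)) = 0"
    by (rule char_sum_zero[OF _ K_add y0(1), where psi="\<lambda>y. chi (c * y)"])
       (auto simp: y0(2) distrib_left chi_add)
  thus ?thesis by simp
qed

lemma S_cases: "l \<in> unit_circle n \<Longrightarrow> Ssum a l = 2^n - 1 \<or> Ssum a l = -1"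
  using fib_nonempty S_eq T_cases by fastforce

lemma decomp_S:
  fixes F :: "'a \<Rightarrow> int"
  shows "(\<Sum>x\<in>UNIV - {0}. F (x ^ (2^n - 1)) * chi (a * x)) = (\<Sum>l\<in>unit_circle n. F l * Ssum a l)"
  unfolding Ssum_def by (rule decomp)

lemma Ssum_zero: "Ssum 0 l = of_nat (card (fib l))"
  by (simp add: Ssum_def)

lemma la_U: "(a::'a) \<noteq> 0 \<Longrightarrow> inverse (a ^ (2^n - 1)) \<in> unit_circle n"
proof -
  assume "a \<noteq> 0"
  hence "(a ^ (2^n - 1)) ^ (2^n + 1) = 1" using pow_in_U unfolding unit_circle_def by blast
  moreover have "(inverse (a ^ (2^n - 1))) ^ (2^n + 1) = inverse ((a ^ (2^n - 1)) ^ (2^n + 1))"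
    by (rule power_inverse)
  ultimately show ?thesis unfolding unit_circle_def by simp
qed

lemma S_alpha:
  assumes "a \<noteq> 0"
  shows "Ssum a (inverse (a ^ (2^n - 1))) = 2^n - 1"
proof -
  let ?la = "inverse (a ^ (2^n - 1))"
  have "?la \<in> unit_circle n" by (rule la_U[OF assms])
  then obtain x0 where x0: "x0 \<in> fib ?la" using fib_nonempty by blast
  hence "x0 \<noteq> 0" "x0 ^ (2^n - 1) = ?la" by (auto simp: fib_def)
  hence x0nz: "x0 \<noteq> 0" and x0l: "x0 ^ (2^n - 1) = ?la" .
  have "(a * x0) ^ (2^n - 1) = a ^ (2^n - 1) * x0 ^ (2^n - 1)" by (rule power_mult_distrib)
  also have "\<dots> = 1" unfolding x0l using assms by simp
  finally have "a * x0 \<in> fib 1" using assms x0nz by (simp add: fib_def)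
  hence c: "a * x0 \<in> Kset" using fib1 by simp
  have "(\<Sum>y\<in>Kset. chi (a * x0 * y)) = (\<Sum>y\<in>Kset. 1)"
  proof (rule sum.cong)
    fix y assume "y \<in> Kset"
    hence "a * x0 * y \<in> Kset" by (rule K_mult[OF c])
    thus "chi (a * x0 * y) = 1" by (simp add: chi_def b2i_def K_trace)
  qed simp
  thus ?thesis using S_eq[OF x0] card_K by simp
qed

lemma sum_chi_zero:
  assumes "a \<noteq> 0"
  shows "(\<Sum>x\<in>UNIV. chi (a * x)) = 0"
proof -
  have "(\<Sum>x\<in>UNIV. chi (a * x)) = (\<Sum>z\<in>UNIV. chi z)"
    by (rule sum.reindex_bij_betw)
       (use assms in \<open>auto simp: bij_betw_def inj_on_def intro!: image_eqI[where x="_ / a"]\<close>)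
  also obtain z0 where "abs_trace (2*n) z0 = (1::'a)" using trace_nonzero by blast
  hence "chi z0 = -1" by (simp add: chi_def b2i_def)
  hence "(\<Sum>z\<in>UNIV. chi z) = 0"
    by (intro char_sum_zero[of UNIV z0 chi]) (auto simp: chi_add)
  finally show ?thesis .
qed

lemma S_other:
  assumes "a \<noteq> 0" and l: "l \<in> unit_circle n" and ne: "l \<noteq> inverse (a ^ (2^n - 1))"
  shows "Ssum a l = -1"
proof -
  let ?la = "inverse (a ^ (2^n - 1))"
  let ?U = "unit_circle n :: 'a set"
  have la: "?la \<in> ?U" by (rule la_U[OF assms(1)])
  have "(\<Sum>x\<in>UNIV - {0}. (\<lambda>_. 1::int) (x ^ (2^n - 1)) * chi (a * x)) = (\<Sum>l\<in>?U. 1 * Ssum a l)"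
    unfolding Ssum_def by (rule decomp)
  moreover have "(\<Sum>x\<in>UNIV - {0}. chi (a * x)) = (\<Sum>x\<in>UNIV. chi (a * x)) - chi (a * 0)"
    by (subst sum_diff1) auto
  ultimately have "(\<Sum>l\<in>?U. Ssum a l) = -1" using sum_chi_zero[OF assms(1)] by simp
  hence "(\<Sum>l\<in>?U. Ssum a l + 1) = 2^n" using card_U by (simp add: sum.distrib)
  moreover have "(\<Sum>l\<in>?U. Ssum a l + 1) = (Ssum a ?la + 1) + (\<Sum>l\<in>?U - {?la}. Ssum a l + 1)"
    using la by (simp add: sum.remove)
  ultimately have z: "(\<Sum>l\<in>?U - {?la}. Ssum a l + 1) = 0" using S_alpha[OF assms(1)] by simp
  have nn: "\<forall>l\<in>?U - {?la}. Ssum a l + 1 \<ge> 0"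
  proof
    fix l assume "l \<in> ?U - {?la}"
    hence "Ssum a l = 2^n - 1 \<or> Ssum a l = -1" using S_cases by blast
    moreover have "(0::int) \<le> 2^n" by simp
    ultimately show "Ssum a l + 1 \<ge> 0" by auto
  qed
  have fin: "finite (?U - {?la})" by simp
  have "\<forall>l\<in>?U - {?la}. Ssum a l + 1 = 0"
    using sum_nonneg_eq_0_iff[OF fin, of "\<lambda>l. Ssum a l + 1"] z nn by blast
  hence "Ssum a l + 1 = 0" using l ne by blast
  thus ?thesis by linarith
qed

end


theorem proposition3:
  fixes n :: nat and g :: "'a::{field,finite} \<Rightarrow> 'a" and \<alpha> :: 'a
  assumes card: "card (UNIV :: 'a set) = 2 ^ (2 * n)"
    and q_gt_2: "(2::nat) ^ n > 2"
    and bool_valued: "\<forall>x::'a. g (x ^ (2 ^ n - 1)) \<in> {0, 1}"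
  shows "walsh n (\<lambda>x. g (x ^ (2 ^ n - 1))) \<alpha> =
    (if \<alpha> \<noteq> 0 then
       (-1) ^ b2i (g 0) - (\<Sum>l\<in>unit_circle n. (-1) ^ b2i (g l))
         + (-1) ^ b2i (g (inverse (\<alpha> ^ (2 ^ n - 1)))) * 2 ^ n
     else
       (-1) ^ b2i (g 0) + (2 ^ n - 1) * (\<Sum>l\<in>unit_circle n. (-1) ^ b2i (g ((l ^ (2 ^ n)) ^ 2))))"
proof -
  define h :: "'a \<Rightarrow> int" where "h l = (-1) ^ b2i (g l)" for l
  let ?U = "unit_circle n :: 'a set"
  let ?F = "\<lambda>x::'a. h (x ^ (2^n - 1)) * chi n (\<alpha> * x)"
  have W: "walsh n (\<lambda>x. g (x ^ (2 ^ n - 1))) \<alpha> = (\<Sum>x\<in>UNIV. ?F x)"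
    unfolding walsh_def h_def by (simp add: power_add chi_eq[OF card q_gt_2])
  have "(\<Sum>x\<in>UNIV. ?F x) = ?F 0 + (\<Sum>x\<in>UNIV - {0}. ?F x)"
    by (rule sum.remove) auto
  moreover have "?F 0 = h 0"
  proof -
    have "(0::'a) ^ (2^n - 1) = 0" using q_gt_2 by simp
    hence "h ((0::'a) ^ (2^n - 1)) = h 0" by (simp only:)
    thus ?thesis by (simp only: mult_zero_right chi_zero[OF card q_gt_2] mult_1_right)
  qed
  moreover have "(\<Sum>x\<in>UNIV - {0}. ?F x) = (\<Sum>l\<in>?U. h l * Ssum n \<alpha> l)"
    by (rule decomp_S[OF card q_gt_2])
  ultimately have W2: "walsh n (\<lambda>x. g (x ^ (2 ^ n - 1))) \<alpha> = h 0 + (\<Sum>l\<in>?U. h l * Ssum n \<alpha> l)"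
    using W by simp
  show ?thesis
  proof (cases "\<alpha> = 0")
    case True
    have "Ssum n \<alpha> l = 2^n - 1" if "l \<in> ?U" for l
    proof -
      have "Ssum n \<alpha> l = of_nat (card (fib n l))" using True
        by (simp add: Ssum_zero[OF card q_gt_2])
      also have "\<dots> = of_nat (2^n - 1)" using card_fib[OF card q_gt_2 that] by simp
      also have "\<dots> = 2^n - 1" by (simp add: of_nat_diff)
      finally show ?thesis .
    qed
    hence "(\<Sum>l\<in>?U. h l * Ssum n \<alpha> l) = (\<Sum>l\<in>?U. h l * (2^n - 1))"
      by (intro sum.cong) simp_all
    also have "\<dots> = (\<Sum>l\<in>?U. h l) * (2^n - 1)" by (simp add: sum_distrib_right)
    also have "\<dots> = (2^n - 1) * (\<Sum>l\<in>?U. h l)" by (rule mult.commute)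
    also have "(\<Sum>l\<in>?U. h l) = (\<Sum>l\<in>?U. h ((l ^ (2^n)) ^ 2))"
      by (rule sq_map_U[OF card q_gt_2])
    finally show ?thesis using W2 True by (simp add: h_def)
  next
    case False
    let ?la = "inverse (\<alpha> ^ (2^n - 1))"
    have la: "?la \<in> ?U" by (rule la_U[OF card q_gt_2 False])
    have "h l * Ssum n \<alpha> l = (if l = ?la then h l * 2^n else 0) - h l" if "l \<in> ?U" for l
    proof (cases "l = ?la")
      case True
      have "Ssum n \<alpha> l = 2^n - 1" using S_alpha[OF card q_gt_2 False] True by simp
      thus ?thesis using True by (simp add: right_diff_distrib)
    next
      case False
      thus ?thesis using S_other[OF card q_gt_2 \<open>\<alpha> \<noteq> 0\<close> that] by simp
    qed
    hence "(\<Sum>l\<in>?U. h l * Ssum n \<alpha> l) = (\<Sum>l\<in>?U. (if l = ?la then h l * 2^n else 0) - h l)"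
      by (intro sum.cong) simp_all
    also have "\<dots> = (\<Sum>l\<in>?U. (if l = ?la then h l * 2^n else 0)) - (\<Sum>l\<in>?U. h l)"
      by (rule sum_subtractf)
    also have "(\<Sum>l\<in>?U. (if l = ?la then h l * 2^n else 0)) = h ?la * 2^n"
      using la by (simp add: sum.delta')
    finally show ?thesis using W2 False by (simp add: h_def)
  qed
qed

end
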